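(* Let $\mathcal{R}$ be a PTRS and let $\mathfrak{P}=(V,E,L_{\mathcal{A}},L_{\mathcal{C}})$ be a well-formed solved proof tree whose root $v_1$ satisfies $L_{\mathcal{A}}(v_1)=\langle\mathcal{A}(\mathcal{R}),\mathcal{A}(\mathcal{R})\rangle$. Then $\iota_{\mathcal{R}}\sqsubseteq\max\{L_{\mathcal{C}}(v)\mid v\in V\}$.
   Context: PTRS: a finite set $\mathcal{R}$ of rules $\ell\to\{p_1:r_1,\dots,p_k:r_k\}$ over a finite signature $\Sigma$, $\ell$ not a variable, $0<p_j\le1$, $\sum p_j=1$, $\mathcal{V}(r_j)\subseteq\mathcal{V}(\ell)$. Defined symbols $\mathcal{D}$ = roots of left-hand sides; basic terms are $f(t_1,\dots,t_k)$ with $f\in\mathcal{D}$ and $t_i$ containing no defined symbols; $|t|$ is term size. Innermost rewriting: $s\to_{\mathcal{R}}\{p_j:s[r_j\sigma]_\pi\}$ if $s|_\pi=\ell\sigma$ and all proper subterms of $\ell\sigma$ are $\mathcal{R}$-normal forms. A rewrite sequence tree (RST) is a possibly infinite, finitely branching tree with nodes labeled $(p_v:t_v)$, root probability 1, and $t_v\to_{\mathcal{R}}\{\tfrac{p_w}{p_v}:t_w\}_{w\text{ child}}$ for inner nodes; $\operatorname{edl}(\mathfrak{T})=\sum_{v\text{ inner}}p_v$; $\operatorname{edh}_{\mathcal{R}}(t)=\sup$ of $\operatorname{edl}$ over RSTs with root $t$; $\operatorname{eirc}_{\mathcal{R}}(n)=\sup\{\operatorname{edh}_{\mathcal{R}}(t)\mid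 t\text{ basic},|t|\le n\}$; $\iota_{\mathcal{R}}=\iota(\operatorname{eirc}_{\mathcal{R}})$. Complexities $\mathfrak{C}=\{\mathrm{Pol}_0,\mathrm{Pol}_1,\dots,\mathrm{Exp},\mathrm{2\text{-}Exp},\mathrm{Fin},\omega\}$ ordered $\mathrm{Pol}_0\sqsubset\mathrm{Pol}_1\sqsubset\dots\sqsubset\mathrm{Exp}\sqsubset\mathrm{2\text{-}Exp}\sqsubset\mathrm{Fin}\sqsubset\omega$, $\oplus$ = maximum; $\iota(f)=\mathrm{Pol}_a$ for least $a$ with $f\in O(n^a)$, else $\mathrm{Exp}$ if $f\in O(2^{\mathrm{pol}(n)})$, else $\mathrm{2\text{-}Exp}$ if $f\in O(2^{2^{\mathrm{pol}(n)}})$, else $\mathrm{Fin}$ if $f$ never equals $\omega$, else $\omega$. Annotated dependency pairs: fresh symbols $f^\sharp$ for $f\in\mathcal{D}$; $\flat$ removes annotations, $\sharp_{\mathcal{D}}(t)$ annotates all defined symbols, $\flat^\uparrow_\pi$ removes annotations strictly above $\pi$, $t^\sharp$ annotates the root. An ADP is $\ell\to\{p_1:r_1,\dots,p_k:r_k\}^m$ with $r_j$ possibly annotated and flag $m\in\{\mathsf{true},\mathsf{false}\}$. $\mathcal{A}(\mathcal{R})=\{\ell\to\{p_1:\sharp_{\mathcal{D}}(r_1),\dots,p_k:\sharp_{\mathcal{D}}(r_k)\}^{\mathsf{true}}\mid \ell\to\{p_1:r_1,\dots\}\in\mathcal{R}\}$. Rewriting with a set $\mathcal{P}$ of ADPs: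 at a position $\pi$ with defined or annotated symbol, ADP $\ell\to\{p_j:r_j\}^m\in\mathcal{P}$, $\sigma$ with $\flat(s|_\pi)=\ell\sigma$ having only normal-form proper subterms: $t_j=s[r_j\sigma]_\pi$ (at: $m=\mathsf{true}$, $\pi$ annotated), $s[\flat(r_j)\sigma]_\pi$ (nt), $\flat^\uparrow_\pi(s[r_j\sigma]_\pi)$ (af: $m=\mathsf{false}$, annotated), $\flat^\uparrow_\pi(s[\flat(r_j)\sigma]_\pi)$ (nf). $\mathcal{P}$-chain trees are defined like RSTs with this relation. For $\mathcal{S}\subseteq\mathcal{P}$: $\operatorname{edl}_{\langle\mathcal{P},\mathcal{S}\rangle}(\mathfrak{T})$ sums $p_v$ over inner nodes rewritten by (at)/(af)-steps with ADPs from $\mathcal{S}$; $\operatorname{edh}_{\langle\mathcal{P},\mathcal{S}\rangle}(t)$ = supremum over chain trees with root $t^\sharp$ for basic $t$; $\iota_{\langle\mathcal{P},\mathcal{S}\rangle}=\iota(n\mapsto\sup\{\operatorname{edh}_{\langle\mathcal{P},\mathcal{S}\rangle}(t)\mid t\text{ basic},|t|\le n\})$. ADP problems $\langle\mathcal{P},\mathcal{S}\rangle$ ($\mathcal{S}\subseteq\mathcal{P}$, solved iff $\mathcal{S}=\emptyset$); processors map an ADP problem to a complexity and a finite set of ADP problems. A proof tree $(V,E,L_{\mathcal{A}},L_{\mathcal{C}})$ is a finite tree labeling nodes with ADP problems and complexities such that at each inner node $v$ with children $w_i$ some processor maps $L_{\mathcal{A}}(v)$ to $(L_{\mathcal{C}}(v),\{L_{\mathcal{A}}(w_i)\})$,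 and leaves carry $\mathrm{Pol}_0$ if solved, $\omega$ otherwise; it is solved if all leaf problems are solved. It is well formed if for every node $v$ with $L_{\mathcal{A}}(v)=\langle\mathcal{P},\mathcal{S}\rangle$ and root path $v_1,\dots,v_k=v$: $\iota_{\langle\mathcal{P},\mathcal{S}\rangle}\sqsubseteq L_{\mathcal{C}}(v_1)\oplus\dots\oplus L_{\mathcal{C}}(v_{k-1})\oplus\max\{L'_{\mathcal{C}}(w)\mid w$ reachable from $v$ including $v\}$ and $\iota_{\langle\mathcal{P},\mathcal{P}\setminus\mathcal{S}\rangle}\sqsubseteq L_{\mathcal{C}}(v_1)\oplus\dots\oplus L_{\mathcal{C}}(v_{k-1})$, with $L'_{\mathcal{C}}=L_{\mathcal{C}}$ on inner nodes and $L'_{\mathcal{C}}(w)=\iota_{L_{\mathcal{A}}(w)}$ on leaves (empty $\oplus$ is $\mathrm{Pol}_0$). *)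

theory Defs
  imports Complex_Main "HOL-Library.Extended_Nonnegative_Real" "HOL-Library.Product_Lexorder"
begin

datatype (funs_trm: 'f, vars_trm: 'v) trm = Var 'v | Fun 'f "('f,'v) trm list"

primrec tsize :: "('f,'v) trm \<Rightarrow> nat" where
  "tsize (Var x) = 1"
| "tsize (Fun f ts) = Suc (sum_list (map tsize ts))"

fun wf_trm :: "('f \<times> nat) set \<Rightarrow> ('f,'v) trm \<Rightarrow> bool" where
  "wf_trm \<Sigma> (Var x) = True"
| "wf_trm \<Sigma> (Fun f ts) = ((f, length ts) \<in> \<Sigma> \<and> (\<forall>t\<in>set ts. wf_trm \<Sigma> t))"

primrec subst :: "('v \<Rightarrow> ('f,'w) trm) \<Rightarrow> ('f,'v) trm \<Rightarrow> ('f,'w) trm" where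
  "subst \<sigma> (Var x) = \<sigma> x"
| "subst \<sigma> (Fun f ts) = Fun f (map (subst \<sigma>) ts)"

inductive is_pos :: "('f,'v) trm \<Rightarrow> nat list \<Rightarrow> bool" where
  "is_pos t []"
| "i < length ts \<Longrightarrow> is_pos (ts ! i) p \<Longrightarrow> is_pos (Fun f ts) (i # p)"

fun subt_at :: "('f,'v) trm \<Rightarrow> nat list \<Rightarrow> ('f,'v) trm" where
  "subt_at t [] = t"
| "subt_at (Var x) (i # p) = Var x"
| "subt_at (Fun f ts) (i # p) = subt_at (ts ! i) p"

fun replace_at :: "('f,'v) trm \<Rightarrow> nat list \<Rightarrow> ('f,'v) trm \<Rightarrow> ('f,'v) trm" where
  "replace_at t [] s = s"
| "replace_at (Var x) (i # p) s = Var x"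
| "replace_at (Fun f ts) (i # p) s = Fun f (ts[i := replace_at (ts ! i) p s])"

type_synonym ('f,'v) prule = "('f,'v) trm \<times> (real \<times> ('f,'v) trm) list"

definition PTRS :: "('f \<times> nat) set \<Rightarrow> ('f,'v) prule set \<Rightarrow> bool" where
  "PTRS \<Sigma> R \<longleftrightarrow> finite \<Sigma> \<and> finite R \<and>
     (\<forall>(l, mu) \<in> R. (\<forall>x. l \<noteq> Var x) \<and> wf_trm \<Sigma> l \<and>
        (\<forall>(p, r) \<in> set mu. 0 < p \<and> p \<le> 1 \<and> wf_trm \<Sigma> r \<and> vars_trm r \<subseteq> vars_trm l) \<and>
        sum_list (map fst mu) = 1)"

definition defined_syms :: "('f,'v) prule set \<Rightarrow> 'f set" where
  "defined_syms R = {f. \<exists>l mu ts. (l, mu) \<in> R \<and> l = Fun f ts}"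

definition basic :: "('f \<times> nat) set \<Rightarrow> ('f,'v) prule set \<Rightarrow> ('f,'v) trm \<Rightarrow> bool" where
  "basic \<Sigma> R t \<longleftrightarrow> wf_trm \<Sigma> t \<and>
     (\<exists>f ts. t = Fun f ts \<and> f \<in> defined_syms R \<and> (\<forall>s\<in>set ts. funs_trm s \<inter> defined_syms R = {}))"

definition NF :: "('f,'v) trm set \<Rightarrow> ('f,'v) trm \<Rightarrow> bool" where
  "NF L t \<longleftrightarrow> (\<forall>p. is_pos t p \<longrightarrow> \<not> (\<exists>l\<in>L. \<exists>\<sigma>. subt_at t p = subst \<sigma> l))"

definition args_NF :: "('f,'v) trm set \<Rightarrow> ('f,'v) trm \<Rightarrow> bool" where
  "args_NF L u \<longleftrightarrow> (\<forall>q. is_pos u q \<and> q \<noteq> [] \<longrightarrow> NF L (subt_at u q))"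

text \<open>Innermost rewrite step \<open>s \<rightarrow>\<^sub>R {p1:t1,...,pk:tk}\<close> (multi-distribution as a list).\<close>
definition istep :: "('f,'v) prule set \<Rightarrow> ('f,'v) trm \<Rightarrow> (real \<times> ('f,'v) trm) list \<Rightarrow> bool" where
  "istep R s nu \<longleftrightarrow> (\<exists>\<pi> l mu \<sigma>. (l, mu) \<in> R \<and> is_pos s \<pi> \<and> subt_at s \<pi> = subst \<sigma> l \<and>
      args_NF (fst ` R) (subst \<sigma> l) \<and>
      nu = map (\<lambda>(p, r). (p, replace_at s \<pi> (subst \<sigma> r))) mu)"

section \<open>Trees (possibly infinite, finitely branching), nodes are lists of child indices\<close>

definition is_tree :: "nat list set \<Rightarrow> bool" where
  "is_tree N \<longleftrightarrow> [] \<in> N \<and> (\<forall>v i. v @ [i] \<in> N \<longrightarrow> v \<in> N) \<and>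
     (\<forall>v\<in>N. \<exists>k. {i. v @ [i] \<in> N} = {..<k})"

definition nchildren :: "nat list set \<Rightarrow> nat list \<Rightarrow> nat" where
  "nchildren N v = card {i. v @ [i] \<in> N}"

definition inner :: "nat list set \<Rightarrow> nat list \<Rightarrow> bool" where
  "inner N v \<longleftrightarrow> v \<in> N \<and> v @ [0] \<in> N"

definition children_dist :: "nat list set \<Rightarrow> (nat list \<Rightarrow> real) \<Rightarrow> (nat list \<Rightarrow> 'a) \<Rightarrow> nat list \<Rightarrow> (real \<times> 'a) list" where
  "children_dist N pr tm v = map (\<lambda>i. (pr (v @ [i]) / pr v, tm (v @ [i]))) [0..<nchildren N v]"

definition RST :: "('f,'v) prule set \<Rightarrow> nat list set \<Rightarrow> (nat list \<Rightarrow> real) \<Rightarrow> (nat list \<Rightarrow> ('f,'v) trm) \<Rightarrow> ('f,'v) trm \<Rightarrow> bool" where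
  "RST R N pr tm t0 \<longleftrightarrow> is_tree N \<and> pr [] = 1 \<and> tm [] = t0 \<and>
     (\<forall>v. inner N v \<longrightarrow> istep R (tm v) (children_dist N pr tm v))"

definition psum :: "(nat list \<Rightarrow> real) \<Rightarrow> nat list set \<Rightarrow> ennreal" where
  "psum pr A = (SUP F \<in> {F. finite F \<and> F \<subseteq> A}. \<Sum>v\<in>F. ennreal (pr v))"

definition edl :: "nat list set \<Rightarrow> (nat list \<Rightarrow> real) \<Rightarrow> ennreal" where
  "edl N pr = psum pr {v. inner N v}"

definition edh :: "('f,'v) prule set \<Rightarrow> ('f,'v) trm \<Rightarrow> ennreal" where
  "edh R t = (SUP T \<in> {(N, pr, tm). RST R N pr tm t}. (case T of (N, pr, tm) \<Rightarrow> edl N pr))"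

definition eirc :: "('f \<times> nat) set \<Rightarrow> ('f,'v) prule set \<Rightarrow> nat \<Rightarrow> ennreal" where
  "eirc \<Sigma> R n = (SUP t \<in> {t. basic \<Sigma> R t \<and> tsize t \<le> n}. edh R t)"

datatype complexity = Pol nat | Exp | TwoExp | Fin | Omega

fun crank :: "complexity \<Rightarrow> nat \<times> nat" where
  "crank (Pol a) = (0, a)"
| "crank Exp = (1, 0)"
| "crank TwoExp = (2, 0)"
| "crank Fin = (3, 0)"
| "crank Omega = (4, 0)"

lemma crank_inj: "crank x = crank y \<Longrightarrow> x = y"
  by (cases x; cases y; simp)

instantiation complexity :: linorder
begin
definition less_eq_complexity :: "complexity \<Rightarrow> complexity \<Rightarrow> bool" where
  "less_eq_complexity x y \<longleftrightarrow> crank x \<le> crank y"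
definition less_complexity :: "complexity \<Rightarrow> complexity \<Rightarrow> bool" where
  "less_complexity x y \<longleftrightarrow> crank x < crank y"
instance
  by standard (auto simp: less_eq_complexity_def less_complexity_def intro: crank_inj)
end

definition bigO :: "(nat \<Rightarrow> ennreal) \<Rightarrow> (nat \<Rightarrow> real) \<Rightarrow> bool" where
  "bigO f g \<longleftrightarrow> (\<exists>c::real. \<exists>N. \<forall>n\<ge>N. f n \<le> ennreal (c * g n))"

definition iota :: "(nat \<Rightarrow> ennreal) \<Rightarrow> complexity" where
  "iota f =
    (if \<exists>a. bigO f (\<lambda>n. real n ^ a) then Pol (LEAST a. bigO f (\<lambda>n. real n ^ a))
     else if \<exists>c d. bigO f (\<lambda>n. 2 powr (c * real n ^ d)) then Exp
     else if \<exists>c d. bigO f (\<lambda>n. 2 powr (2 powr (c * real n ^ d))) then TwoExp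
     else if \<forall>n. f n \<noteq> top then Fin
     else Omega)"

text \<open>Maximum of a finite set of complexities; the empty maximum is \<open>Pol 0\<close>.\<close>
definition cmax :: "complexity set \<Rightarrow> complexity" where
  "cmax A = Max (insert (Pol 0) A)"

definition iota_R :: "('f \<times> nat) set \<Rightarrow> ('f,'v) prule set \<Rightarrow> complexity" where
  "iota_R \<Sigma> R = iota (eirc \<Sigma> R)"

text \<open>Annotated symbols: \<open>(f, True)\<close> is \<open>f\<^sup>\<sharp>\<close>, \<open>(f, False)\<close> is \<open>f\<close>.\<close>
type_synonym ('f,'v) atrm = "('f \<times> bool, 'v) trm"
type_synonym ('f,'v) adp = "('f,'v) trm \<times> (real \<times> ('f,'v) atrm) list \<times> bool"

definition embed :: "('f,'v) trm \<Rightarrow> ('f,'v) atrm" where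
  "embed t = map_trm (\<lambda>f. (f, False)) id t"

definition flat :: "('f,'v) atrm \<Rightarrow> ('f,'v) trm" where
  "flat t = map_trm fst id t"

definition sharp_D :: "'f set \<Rightarrow> ('f,'v) trm \<Rightarrow> ('f,'v) atrm" where
  "sharp_D D t = map_trm (\<lambda>f. (f, f \<in> D)) id t"

fun sharp_root :: "('f,'v) trm \<Rightarrow> ('f,'v) atrm" where
  "sharp_root (Var x) = Var x"
| "sharp_root (Fun f ts) = Fun (f, True) (map embed ts)"

text \<open>\<open>\<flat>\<^sup>\<up>\<^sub>\<pi>\<close>: remove the annotations strictly above position \<open>\<pi>\<close>.\<close>
fun flat_above :: "('f,'v) atrm \<Rightarrow> nat list \<Rightarrow> ('f,'v) atrm" where
  "flat_above t [] = t"
| "flat_above (Var x) (i # p) = Var x"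
| "flat_above (Fun (f, b) ts) (i # p) = Fun (f, False) (ts[i := flat_above (ts ! i) p])"

definition annotated_at :: "('f,'v) atrm \<Rightarrow> nat list \<Rightarrow> bool" where
  "annotated_at s \<pi> \<longleftrightarrow> (\<exists>f ts. subt_at s \<pi> = Fun (f, True) ts)"

definition A_of :: "('f,'v) prule set \<Rightarrow> ('f,'v) adp set" where
  "A_of R = {(l, map (\<lambda>(p, r). (p, sharp_D (defined_syms R) r)) mu, True) | l mu. (l, mu) \<in> R}"

definition adp_lhss :: "('f,'v) adp set \<Rightarrow> ('f,'v) trm set" where
  "adp_lhss P = (\<lambda>(l, mu, m). l) ` P"

text \<open>Cases (at)/(af) occur iff the position is annotated, (nt)/(nf) otherwise;
  the flag selects (at)/(nt) (true) versus (af)/(nf) (false).\<close>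
definition adp_step :: "('f,'v) prule set \<Rightarrow> ('f,'v) adp set \<Rightarrow> ('f,'v) atrm \<Rightarrow>
    nat list \<times> ('f,'v) adp \<times> ('v \<Rightarrow> ('f,'v) trm) \<Rightarrow> (real \<times> ('f,'v) atrm) list \<Rightarrow> bool" where
  "adp_step R P s w nu \<longleftrightarrow> (case w of (\<pi>, (l, mu, m), \<sigma>) \<Rightarrow>
     (l, mu, m) \<in> P \<and> is_pos s \<pi> \<and>
     (\<exists>f b ts. subt_at s \<pi> = Fun (f, b) ts \<and> (b \<or> f \<in> defined_syms R)) \<and>
     flat (subt_at s \<pi>) = subst \<sigma> l \<and> args_NF (adp_lhss P) (subst \<sigma> l) \<and>
     nu = map (\<lambda>(p, r).
        (p, (let r' = (if annotated_at s \<pi> then r else embed (flat r));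
                 t = replace_at s \<pi> (subst (embed \<circ> \<sigma>) r')
             in if m then t else flat_above t \<pi>))) mu)"

definition chain_tree :: "('f,'v) prule set \<Rightarrow> ('f,'v) adp set \<Rightarrow> nat list set \<Rightarrow> (nat list \<Rightarrow> real) \<Rightarrow>
    (nat list \<Rightarrow> ('f,'v) atrm) \<Rightarrow> (nat list \<Rightarrow> nat list \<times> ('f,'v) adp \<times> ('v \<Rightarrow> ('f,'v) trm)) \<Rightarrow>
    ('f,'v) atrm \<Rightarrow> bool" where
  "chain_tree R P N pr tm info t0 \<longleftrightarrow> is_tree N \<and> pr [] = 1 \<and> tm [] = t0 \<and>
     (\<forall>v. inner N v \<longrightarrow> adp_step R P (tm v) (info v) (children_dist N pr tm v))"

text \<open>Nodes rewritten by an (at)- or (af)-step using an ADP from \<open>S\<close>.\<close>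
definition edl_PS :: "('f,'v) adp set \<Rightarrow> nat list set \<Rightarrow> (nat list \<Rightarrow> real) \<Rightarrow>
    (nat list \<Rightarrow> ('f,'v) atrm) \<Rightarrow> (nat list \<Rightarrow> nat list \<times> ('f,'v) adp \<times> ('v \<Rightarrow> ('f,'v) trm)) \<Rightarrow> ennreal" where
  "edl_PS S N pr tm info =
     psum pr {v. inner N v \<and> fst (snd (info v)) \<in> S \<and> annotated_at (tm v) (fst (info v))}"

definition edh_PS :: "('f,'v) prule set \<Rightarrow> ('f,'v) adp set \<Rightarrow> ('f,'v) adp set \<Rightarrow> ('f,'v) trm \<Rightarrow> ennreal" where
  "edh_PS R P S t = (SUP T \<in> {(N, pr, tm, info). chain_tree R P N pr tm info (sharp_root t)}.
      (case T of (N, pr, tm, info) \<Rightarrow> edl_PS S N pr tm info))"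

definition iota_PS :: "('f \<times> nat) set \<Rightarrow> ('f,'v) prule set \<Rightarrow> ('f,'v) adp set \<times> ('f,'v) adp set \<Rightarrow> complexity" where
  "iota_PS \<Sigma> R PS = (case PS of (P, S) \<Rightarrow>
     iota (\<lambda>n. SUP t \<in> {t. basic \<Sigma> R t \<and> tsize t \<le> n}. edh_PS R P S t))"

type_synonym ('f,'v) adp_problem = "('f,'v) adp set \<times> ('f,'v) adp set"

definition ptree_inner :: "nat list set \<Rightarrow> nat list \<Rightarrow> bool" where
  "ptree_inner V v \<longleftrightarrow> v \<in> V \<and> (\<exists>i. v @ [i] \<in> V)"

definition ptree_children :: "nat list set \<Rightarrow> nat list \<Rightarrow> nat list set" where
  "ptree_children V v = {w \<in> V. \<exists>i. w = v @ [i]}"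

text \<open>A (finite) proof tree; a processor is any map from ADP problems to a complexity and a
  finite set of ADP problems.\<close>
definition proof_tree :: "nat list set \<Rightarrow> (nat list \<Rightarrow> ('f,'v) adp_problem) \<Rightarrow> (nat list \<Rightarrow> complexity) \<Rightarrow> bool" where
  "proof_tree V LA LC \<longleftrightarrow> finite V \<and> [] \<in> V \<and> (\<forall>v i. v @ [i] \<in> V \<longrightarrow> v \<in> V) \<and>
     (\<forall>v\<in>V. snd (LA v) \<subseteq> fst (LA v)) \<and>
     (\<forall>v. ptree_inner V v \<longrightarrow>
        (\<exists>proc :: ('f,'v) adp_problem \<Rightarrow> complexity \<times> ('f,'v) adp_problem set.
           (\<forall>X. finite (snd (proc X))) \<and>
           proc (LA v) = (LC v, LA ` ptree_children V v))) \<and>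
     (\<forall>v\<in>V. \<not> ptree_inner V v \<longrightarrow> LC v = (if snd (LA v) = {} then Pol 0 else Omega))"

definition ptree_solved :: "nat list set \<Rightarrow> (nat list \<Rightarrow> ('f,'v) adp_problem) \<Rightarrow> bool" where
  "ptree_solved V LA \<longleftrightarrow> (\<forall>v\<in>V. \<not> ptree_inner V v \<longrightarrow> snd (LA v) = {})"

definition well_formed :: "('f \<times> nat) set \<Rightarrow> ('f,'v) prule set \<Rightarrow> nat list set \<Rightarrow>
    (nat list \<Rightarrow> ('f,'v) adp_problem) \<Rightarrow> (nat list \<Rightarrow> complexity) \<Rightarrow> bool" where
  "well_formed \<Sigma> R V LA LC \<longleftrightarrow> (\<forall>v\<in>V.
     (let P = fst (LA v); S = snd (LA v);
          anc = {u. \<exists>x. x \<noteq> [] \<and> v = u @ x};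
          desc = {w \<in> V. \<exists>x. w = v @ x};
          L' = (\<lambda>w. if ptree_inner V w then LC w else iota_PS \<Sigma> R (LA w))
      in iota_PS \<Sigma> R (P, S) \<le> max (cmax (LC ` anc)) (cmax (L' ` desc)) \<and>
         iota_PS \<Sigma> R (P, P - S) \<le> cmax (LC ` anc)))"

end

theory Submission imports Defs begin
fun good :: "'f set \<Rightarrow> ('f,'v) trm set \<Rightarrow> ('f,'v) atrm \<Rightarrow> bool" where
  "good D L (Var x) = True"
| "good D L (Fun fb ts) = ((fst fb \<in> D \<and> \<not> NF L (flat (Fun fb ts)) \<longrightarrow> snd fb) \<and> (\<forall>t\<in>set ts. good D L t))"
lemma flat_simps[simp]: "flat (Var x) = Var x" "flat (Fun fb ts) = Fun (fst fb) (map flat ts)"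
  by (simp_all add: flat_def)
lemma embed_simps[simp]: "embed (Var x) = Var x" "embed (Fun f ts) = Fun (f, False) (map embed ts)"
  by (simp_all add: embed_def)
lemma sharpD_simps[simp]: "sharp_D D (Var x) = Var x" "sharp_D D (Fun f ts) = Fun (f, f \<in> D) (map (sharp_D D) ts)"
  by (simp_all add: sharp_D_def)

lemma flat_embed[simp]: "flat (embed t) = t"
  by (induction t) (auto intro: map_idI)
lemma flat_sharpD[simp]: "flat (sharp_D D t) = t"
  by (induction t) (auto intro: map_idI)
lemma flat_subst: "flat (subst \<tau> t) = subst (flat \<circ> \<tau>) (flat t)"
  by (induction t) auto

lemma is_pos_Fun: "is_pos (Fun f ts) (i # p) \<longleftrightarrow> i < length ts \<and> is_pos (ts ! i) p"
  by (auto elim: is_pos.cases intro: is_pos.intros)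
lemma is_pos_Var: "is_pos (Var x) p \<longleftrightarrow> p = []"
  by (auto elim: is_pos.cases intro: is_pos.intros)
lemma is_pos_Nil[simp]: "is_pos t []" by (rule is_pos.intros)
lemma is_pos_flat[simp]: "is_pos (flat c) p = is_pos c p"
proof (induction p arbitrary: c)
  case Nil then show ?case by simp
next
  case (Cons i p) show ?case
  proof (cases c)
    case (Fun fb ts)
    have "is_pos (flat c) (i # p) = (i < length ts \<and> is_pos (flat (ts ! i)) p)"
      unfolding Fun flat_simps is_pos_Fun by (auto simp del: is_pos_Fun)
    then show ?thesis using Cons.IH Fun is_pos_Fun by metis
  qed (simp add: is_pos_Var)
qed
lemma subt_at_flat: "is_pos c p \<Longrightarrow> subt_at (flat c) p = flat (subt_at c p)"
proof (induction p arbitrary: c)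
  case Nil then show ?case by simp
next
  case (Cons i p) show ?case
  proof (cases c)
    case (Fun fb ts)
    then have i: "i < length ts" "is_pos (ts ! i) p" using Cons.prems is_pos_Fun by metis+
    then show ?thesis using Cons.IH Fun by simp
  qed (use Cons.prems in \<open>simp add: is_pos_Var\<close>)
qed

lemma replace_at_flat: "is_pos c p \<Longrightarrow> flat (replace_at c p u) = replace_at (flat c) p (flat u)"
proof (induction p arbitrary: c)
  case Nil then show ?case by simp
next
  case (Cons i p) show ?case
  proof (cases c)
    case (Fun fb ts)
    then have i: "i < length ts" "is_pos (ts ! i) p" using Cons.prems is_pos_Fun by metis+
    then show ?thesis using Cons.IH Fun by (simp add: map_update)
  qed (use Cons.prems in \<open>simp add: is_pos_Var\<close>)
qed

lemma pos_append: "is_pos t p \<Longrightarrow> is_pos (subt_at t p) q \<Longrightarrow> is_pos t (p @ q) \<and> subt_at t (p @ q) = subt_at (subt_at t p) q"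
proof (induction p arbitrary: t)
  case Nil then show ?case by simp
next
  case (Cons i p) show ?case
  proof (cases t)
    case (Fun fb ts)
    then have i: "i < length ts" "is_pos (ts ! i) p" using Cons.prems is_pos_Fun by metis+
    then show ?thesis using Cons.IH[of "ts ! i"] Cons.prems Fun by (simp add: is_pos_Fun)
  qed (use Cons.prems in \<open>simp add: is_pos_Var\<close>)
qed
lemma NF_sub: "NF L t \<Longrightarrow> is_pos t p \<Longrightarrow> NF L (subt_at t p)"
  unfolding NF_def using pos_append by metis

lemma NF_arg: "NF L (Fun f ts) \<Longrightarrow> t \<in> set ts \<Longrightarrow> NF L t"
proof -
  assume a: "NF L (Fun f ts)" "t \<in> set ts"
  then obtain i where i: "i < length ts" "t = ts ! i" by (metis in_set_conv_nth)
  then have "is_pos (Fun f ts) [i]" using is_pos_Fun is_pos_Nil by metis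
  then have "NF L (subt_at (Fun f ts) [i])" using NF_sub a by blast
  then show ?thesis using i by simp
qed

lemma notNF_up: "is_pos t p \<Longrightarrow> \<not> NF L (subt_at t p) \<Longrightarrow> \<not> NF L t"
  using NF_sub by blast

lemma good_subt: "good D L c \<Longrightarrow> is_pos c p \<Longrightarrow> good D L (subt_at c p)"
proof (induction p arbitrary: c)
  case Nil then show ?case by simp
next
  case (Cons i p) show ?case
  proof (cases c)
    case (Fun fb ts)
    then have i: "i < length ts" "is_pos (ts ! i) p" using Cons.prems(2) by (simp_all add: is_pos_Fun)
    then have "good D L (ts ! i)" using Cons.prems(1) Fun by simp
    then show ?thesis using Cons.IH i Fun by simp
  qed (use Cons.prems in \<open>simp add: is_pos_Var\<close>)
qed
lemma good_replace: "good D L c \<Longrightarrow> is_pos c \<pi> \<Longrightarrow> \<not> NF L (flat (subt_at c \<pi>)) \<Longrightarrow> good D L u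
  \<Longrightarrow> good D L (replace_at c \<pi> u)"
proof (induction \<pi> arbitrary: c)
  case Nil then show ?case by simp
next
  case (Cons i p)
  obtain fb ts where c: "c = Fun fb ts" using Cons.prems(2) by (cases c) (auto simp: is_pos_Var)
  then have i: "i < length ts" and pp: "is_pos (ts ! i) p" using Cons.prems(2) by (simp_all add: is_pos_Fun)
  have g: "good D L (ts ! i)" using Cons.prems(1) c i by simp
  have "\<not> NF L (subt_at (flat c) (i # p))" using Cons.prems(3) subt_at_flat[OF Cons.prems(2)] by simp
  hence "\<not> NF L (flat c)"
    using notNF_up[of "flat c" "i # p" L] Cons.prems(2) by simp
  then have root: "fst fb \<in> D \<longrightarrow> snd fb" using Cons.prems(1) c by simp
  have "\<not> NF L (flat (subt_at (ts ! i) p))" using Cons.prems(3) c by simp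
  then have rec: "good D L (replace_at (ts ! i) p u)" using Cons.IH[OF g pp] Cons.prems(4) by simp
  have "\<forall>t\<in>set (ts[i := replace_at (ts ! i) p u]). good D L t"
  proof
    fix t assume "t \<in> set (ts[i := replace_at (ts ! i) p u])"
    then have "t \<in> insert (replace_at (ts ! i) p u) (set ts)" using set_update_subset_insert by fast
    then show "good D L t" using rec Cons.prems(1) c by auto
  qed
  then show ?case using root c by simp
qed

lemma good_embed_NF: "NF L t \<Longrightarrow> good D L (embed t)"
proof (induction t)
  case (Var x) then show ?case by simp
next
  case (Fun f ts) 
  have "map flat (map embed ts) = ts" by (induction ts) auto
  then show ?case using NF_arg[OF Fun.prems] Fun by simp
qed

lemma good_embed_noD: "funs_trm t \<inter> D = {} \<Longrightarrow> good D L (embed t)"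
proof (induction t)
  case (Var x) then show ?case by simp
next
  case (Fun f ts) then show ?case by auto
qed

lemma good_subst_sharp: "(\<forall>x\<in>vars_trm r. good D L (\<tau> x)) \<Longrightarrow> good D L (subst \<tau> (sharp_D D r))"
proof (induction r)
  case (Var x) then show ?case by simp
next
  case (Fun f ts) then show ?case by auto
qed

lemma var_pos: "x \<in> vars_trm l \<Longrightarrow> \<exists>p. is_pos l p \<and> subt_at l p = Var x"
proof (induction l)
  case (Var y) then show ?case by (intro exI[of _ "[]"]) simp
next
  case (Fun f ts)
  then obtain t where t: "t \<in> set ts" "x \<in> vars_trm t" by auto
  then obtain i where i: "i < length ts" "t = ts ! i" by (metis in_set_conv_nth)
  obtain p where "is_pos t p \<and> subt_at t p = Var x" using Fun.IH t by blast
  then show ?case using i is_pos_Fun[of f ts i p] by (intro exI[of _ "i # p"]) simp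
qed

lemma subst_pos: "is_pos l p \<Longrightarrow> is_pos (subst \<sigma> l) p \<and> subt_at (subst \<sigma> l) p = subst \<sigma> (subt_at l p)"
proof (induction p arbitrary: l)
  case Nil then show ?case by simp
next
  case (Cons i p) show ?case
  proof (cases l)
    case (Fun fb ts)
    then have i: "i < length ts" "is_pos (ts ! i) p" using Cons.prems by (simp_all add: is_pos_Fun)
    then show ?thesis using Cons.IH[of "ts ! i"] Fun by (simp add: is_pos_Fun)
  qed (use Cons.prems in \<open>simp add: is_pos_Var\<close>)
qed

lemma subst_var_NF: "args_NF L (subst \<sigma> l) \<Longrightarrow> \<forall>y. l \<noteq> Var y \<Longrightarrow> x \<in> vars_trm l \<Longrightarrow> NF L (\<sigma> x)"
proof -
  assume a: "args_NF L (subst \<sigma> l)" "\<forall>y. l \<noteq> Var y" "x \<in> vars_trm l"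
  obtain p where p: "is_pos l p" "subt_at l p = Var x" using var_pos[OF a(3)] by blast
  have ne: "p \<noteq> []" using p a(2) by (cases p) auto
  have sp: "is_pos (subst \<sigma> l) p" "subt_at (subst \<sigma> l) p = \<sigma> x" using subst_pos[OF p(1), of \<sigma>] p(2) by simp_all
  have "NF L (subt_at (subst \<sigma> l) p)" using a(1) sp(1) ne unfolding args_NF_def by blast
  then show ?thesis using sp(2) by simp
qed
lemma step_inv:
  assumes g: "good D L c" and fc: "flat c = s" and LD: "L = fst ` R" "D = defined_syms R"
    and P: "PTRS \<Sigma> R" and lR: "(l, mu) \<in> R" and pos: "is_pos s \<pi>" and red: "subt_at s \<pi> = subst \<sigma> l"
    and anf: "args_NF L (subst \<sigma> l)" and pr: "(p, r) \<in> set mu"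
  shows "annotated_at c \<pi> \<and> good D L (replace_at c \<pi> (subst (embed \<circ> \<sigma>) (sharp_D D r))) \<and>
    flat (replace_at c \<pi> (subst (embed \<circ> \<sigma>) (sharp_D D r))) = replace_at s \<pi> (subst \<sigma> r)"
proof -
  have nv: "\<forall>x. l \<noteq> Var x" and vr: "vars_trm r \<subseteq> vars_trm l"
    using P lR pr unfolding PTRS_def by fastforce+
  obtain g ls where l: "l = Fun g ls" using nv by (cases l) auto
  have gD: "g \<in> D" using LD(2) lR l unfolding defined_syms_def by blast
  have pc: "is_pos c \<pi>" using pos fc by auto
  have fs: "flat (subt_at c \<pi>) = subst \<sigma> l" using subt_at_flat[OF pc] fc red by simp
  obtain gb ts where sc: "subt_at c \<pi> = Fun gb ts" using fs l by (cases "subt_at c \<pi>") auto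
  have fg: "fst gb = g" using fs sc l by simp
  have lL: "l \<in> L" using LD(1) lR by force
  have nnf: "\<not> NF L (subst \<sigma> l)" unfolding NF_def
    using lL by (metis is_pos_Nil subt_at.simps(1))
  have "good D L (subt_at c \<pi>)" using good_subt[OF g pc] .
  then have "snd gb" using sc fg gD nnf fs by simp
  then have ann: "annotated_at c \<pi>" unfolding annotated_at_def using sc by (cases gb) auto
  have gu: "good D L (subst (embed \<circ> \<sigma>) (sharp_D D r))"
  proof (rule good_subst_sharp, rule ballI)
    fix x assume "x \<in> vars_trm r"
    then have "x \<in> vars_trm l" using vr by blast
    then have "NF L (\<sigma> x)" using subst_var_NF[OF anf nv] by blast
    then show "good D L ((embed \<circ> \<sigma>) x)" using good_embed_NF by simp
  qed
  have gr: "good D L (replace_at c \<pi> (subst (embed \<circ> \<sigma>) (sharp_D D r)))"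
    using good_replace[OF g pc _ gu] fs nnf by simp
  have "flat \<circ> (embed \<circ> \<sigma>) = \<sigma>" by (rule ext) simp
  then have "flat (subst (embed \<circ> \<sigma>) (sharp_D D r)) = subst \<sigma> r" by (simp add: flat_subst)
  then have "flat (replace_at c \<pi> (subst (embed \<circ> \<sigma>) (sharp_D D r))) = replace_at s \<pi> (subst \<sigma> r)"
    using replace_at_flat[OF pc] fc by simp
  then show ?thesis using ann gr by simp
qed
primrec Hc :: "'f set \<Rightarrow> (nat list \<Rightarrow> nat list \<times> ('f,'v) trm \<times> (real \<times> ('f,'v) trm) list \<times> ('v \<Rightarrow> ('f,'v) trm))
    \<Rightarrow> ('f,'v) atrm \<Rightarrow> nat list \<Rightarrow> ('f,'v) atrm" where
  "Hc D W a [] = a"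
| "Hc D W a (i # rv) = (case W (rev rv) of (\<pi>, l, mu, \<sigma>) \<Rightarrow>
      replace_at (Hc D W a rv) \<pi> (subst (embed \<circ> \<sigma>) (sharp_D D (snd (mu ! i)))))"

lemma adp_lhss_A: "adp_lhss (A_of R) = fst ` R"
  unfolding adp_lhss_def A_of_def by force

lemma tree_child:
  assumes "is_tree N" "v @ [i] \<in> N"
  shows "v \<in> N" "inner N v" "i < nchildren N v"
proof -
  have t1: "\<forall>v i. v @ [i] \<in> N \<longrightarrow> v \<in> N" and t2: "\<forall>v\<in>N. \<exists>k. {i. v @ [i] \<in> N} = {..<k}"
    using assms(1) unfolding is_tree_def by simp_all
  show vN: "v \<in> N" using assms(2) t1 by blast
  obtain k where k: "{i. v @ [i] \<in> N} = {..<k}" using vN t2 by blast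
  have "i \<in> {i. v @ [i] \<in> N}" using assms(2) by simp
  then have "i < k" unfolding k by simp
  then have "0 \<in> {..<k}" by simp
  then have "v @ [0] \<in> N" unfolding k[symmetric] by simp
  then show "inner N v" using vN unfolding inner_def by simp
  show "i < nchildren N v" unfolding nchildren_def k using \<open>i < k\<close> by simp
qed

lemma inner_nchildren:
  assumes "is_tree N" "inner N v"
  shows "0 < nchildren N v" "\<And>i. i < nchildren N v \<Longrightarrow> v @ [i] \<in> N"
proof -
  have vN: "v \<in> N" and v0: "v @ [0] \<in> N" using assms(2) unfolding inner_def by auto
  have t2: "\<forall>v\<in>N. \<exists>k. {i. v @ [i] \<in> N} = {..<k}"
    using assms(1) unfolding is_tree_def by simp_all
  obtain k where k: "{i. v @ [i] \<in> N} = {..<k}" using vN t2 by blast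
  have "0 \<in> {i. v @ [i] \<in> N}" using v0 by simp
  then have "0 < k" unfolding k by simp
  then show "0 < nchildren N v" unfolding nchildren_def k by simp
  fix i assume "i < nchildren N v"
  then have "i \<in> {..<k}" unfolding nchildren_def k by simp
  then show "v @ [i] \<in> N" unfolding k[symmetric] by simp
qed

lemma children_dist_len[simp]: "length (children_dist N pr tm v) = nchildren N v"
  unfolding children_dist_def by simp

lemma children_dist_nth: "i < nchildren N v \<Longrightarrow> children_dist N pr tm v ! i = (pr (v @ [i]) / pr v, tm (v @ [i]))"
  unfolding children_dist_def by simp
lemma RST_to_chain:
  assumes P: "PTRS \<Sigma> R" and T: "RST R N pr tm t" and B: "basic \<Sigma> R t"
  shows "\<exists>tm' info. chain_tree R (A_of R) N pr tm' info (sharp_root t) \<and>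
            edl_PS (A_of R) N pr tm' info = edl N pr"
proof -
  define D where "D = defined_syms R"
  define L where "L = fst ` R"
  have tree: "is_tree N" and pr0: "pr [] = 1" and tm0: "tm [] = t"
    and stp: "\<And>v. inner N v \<Longrightarrow> istep R (tm v) (children_dist N pr tm v)"
    using T unfolding RST_def by auto
  define spec where "spec v w \<longleftrightarrow> (case w of (\<pi>, l, mu, \<sigma>) \<Rightarrow> (l, mu) \<in> R \<and> is_pos (tm v) \<pi> \<and>
      subt_at (tm v) \<pi> = subst \<sigma> l \<and> args_NF L (subst \<sigma> l) \<and>
      children_dist N pr tm v = map (\<lambda>(p, r). (p, replace_at (tm v) \<pi> (subst \<sigma> r))) mu)" for v w
  define W where "W v = (SOME w. spec v w)" for v
  have Wspec: "spec v (W v)" if "inner N v" for v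
  proof -
    have "\<exists>w. spec v w" using stp[OF that] unfolding istep_def spec_def L_def by fastforce
    then show ?thesis unfolding W_def by (rule someI_ex)
  qed
  define tm' where "tm' v = Hc D W (sharp_root t) (rev v)" for v
  have tm'0: "tm' [] = sharp_root t" unfolding tm'_def by simp
  have tm'_snoc: "tm' (v @ [i]) = (case W v of (\<pi>, l, mu, \<sigma>) \<Rightarrow>
      replace_at (tm' v) \<pi> (subst (embed \<circ> \<sigma>) (sharp_D D (snd (mu ! i)))))" for v i
    unfolding tm'_def by simp
  define info where "info v = (case W v of (\<pi>, l, mu, \<sigma>) \<Rightarrow>
      (\<pi>, (l, map (\<lambda>(p, r). (p, sharp_D D r)) mu, True), \<sigma>))" for v
  obtain f ts where t: "t = Fun f ts" and tsD: "\<forall>s\<in>set ts. funs_trm s \<inter> D = {}"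
    using B unfolding basic_def D_def by blast
  have child: "length mu = nchildren N v \<and> (\<forall>i < nchildren N v. pr (v @ [i]) / pr v = fst (mu ! i) \<and>
       tm (v @ [i]) = replace_at (tm v) \<pi> (subst \<sigma> (snd (mu ! i))))"
    if "inner N v" "W v = (\<pi>, l, mu, \<sigma>)" for v \<pi> l mu \<sigma>
  proof -
    have eq: "children_dist N pr tm v = map (\<lambda>(p, r). (p, replace_at (tm v) \<pi> (subst \<sigma> r))) mu"
      using Wspec[OF that(1)] that(2) unfolding spec_def by simp
    then have len: "length mu = nchildren N v" using children_dist_len[of N pr tm v] by simp
    have "pr (v @ [i]) / pr v = fst (mu ! i) \<and> tm (v @ [i]) = replace_at (tm v) \<pi> (subst \<sigma> (snd (mu ! i)))"
      if "i < nchildren N v" for i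
    proof -
      have "children_dist N pr tm v ! i = (\<lambda>(p, r). (p, replace_at (tm v) \<pi> (subst \<sigma> r))) (mu ! i)"
        using eq len that by simp
      then show ?thesis using children_dist_nth[OF that, of pr tm] by (cases "mu ! i") simp
    qed
    then show ?thesis using len by blast
  qed
  have inv: "v \<in> N \<Longrightarrow> good D L (tm' v) \<and> flat (tm' v) = tm v" for v
  proof (induction v rule: rev_induct)
    case Nil
    have "map flat (map embed ts) = ts" by (induction ts) auto
    moreover have "\<forall>s\<in>set ts. good D L (embed s)"
    proof
      fix s assume "s \<in> set ts"
      then have "funs_trm s \<inter> D = {}" using tsD by simp
      then show "good D L (embed s)" by (rule good_embed_noD)
    qed
    ultimately show ?case using tm'0 tm0 t by simp
  next
    case (snoc i v)
    have vN: "v \<in> N" and iv: "inner N v" and ic: "i < nchildren N v" using tree_child[OF tree snoc.prems] by auto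
    obtain \<pi> l mu \<sigma> where Wv: "W v = (\<pi>, l, mu, \<sigma>)" by (cases "W v") auto
    have sp: "(l, mu) \<in> R" "is_pos (tm v) \<pi>" "subt_at (tm v) \<pi> = subst \<sigma> l" "args_NF L (subst \<sigma> l)"
      using Wspec[OF iv] Wv unfolding spec_def by simp_all
    have ch: "length mu = nchildren N v" "tm (v @ [i]) = replace_at (tm v) \<pi> (subst \<sigma> (snd (mu ! i)))"
      using child[OF iv Wv] ic by auto
    have mem: "(fst (mu ! i), snd (mu ! i)) \<in> set mu" using ch(1) ic by simp
    have IH: "good D L (tm' v)" "flat (tm' v) = tm v" using snoc.IH vN by auto
    show ?case using step_inv[OF IH L_def D_def P sp mem] ch(2) tm'_snoc[of v i] Wv by simp
  qed
  have stepv: "fst (snd (info v)) \<in> A_of R \<and> annotated_at (tm' v) (fst (info v)) \<and>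
       adp_step R (A_of R) (tm' v) (info v) (children_dist N pr tm' v)" if iv: "inner N v" for v
  proof -
    have vN: "v \<in> N" using iv unfolding inner_def by simp
    obtain \<pi> l mu \<sigma> where Wv: "W v = (\<pi>, l, mu, \<sigma>)" by (cases "W v") auto
    have sp: "(l, mu) \<in> R" "is_pos (tm v) \<pi>" "subt_at (tm v) \<pi> = subst \<sigma> l" "args_NF L (subst \<sigma> l)"
      using Wspec[OF iv] Wv unfolding spec_def by simp_all
    have ch: "length mu = nchildren N v" 
      "\<And>i. i < nchildren N v \<Longrightarrow> pr (v @ [i]) / pr v = fst (mu ! i) \<and>
            tm (v @ [i]) = replace_at (tm v) \<pi> (subst \<sigma> (snd (mu ! i)))"
      using child[OF iv Wv] by auto
    have n0: "0 < nchildren N v" using inner_nchildren[OF tree iv] by simp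
    have mem: "(fst (mu ! 0), snd (mu ! 0)) \<in> set mu" using ch(1) n0 by simp
    have IH: "good D L (tm' v)" "flat (tm' v) = tm v" using inv vN by auto
    have annv: "annotated_at (tm' v) \<pi>" using step_inv[OF IH L_def D_def P sp mem] by simp
    define mu' where "mu' = map (\<lambda>(p, r). (p, sharp_D D r)) mu"
    have inA: "(l, mu', True) \<in> A_of R" unfolding A_of_def mu'_def D_def using sp(1) by blast
    have info: "info v = (\<pi>, (l, mu', True), \<sigma>)" unfolding info_def Wv mu'_def by simp
    have posc: "is_pos (tm' v) \<pi>" using is_pos_flat[of "tm' v" \<pi>] IH(2) sp(2) by simp
    have fl: "flat (subt_at (tm' v) \<pi>) = subst \<sigma> l" using subt_at_flat[OF posc] IH(2) sp(3) by simp
    have ex: "\<exists>f b ts. subt_at (tm' v) \<pi> = Fun (f, b) ts \<and> (b \<or> f \<in> defined_syms R)"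
      using annv unfolding annotated_at_def by blast
    have anf: "args_NF (adp_lhss (A_of R)) (subst \<sigma> l)" using sp(4) unfolding adp_lhss_A L_def .
    have cd: "children_dist N pr tm' v = map (\<lambda>(p, r). (p, replace_at (tm' v) \<pi> (subst (embed \<circ> \<sigma>) r))) mu'"
    proof (rule nth_equalityI)
      show "length (children_dist N pr tm' v) = length (map (\<lambda>(p, r). (p, replace_at (tm' v) \<pi> (subst (embed \<circ> \<sigma>) r))) mu')"
        using ch(1) unfolding mu'_def by simp
      fix i assume "i < length (children_dist N pr tm' v)"
      then have i: "i < nchildren N v" by simp
      have "children_dist N pr tm' v ! i = (pr (v @ [i]) / pr v, tm' (v @ [i]))" using children_dist_nth[OF i] .
      also have "\<dots> = (fst (mu ! i), replace_at (tm' v) \<pi> (subst (embed \<circ> \<sigma>) (sharp_D D (snd (mu ! i)))))"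
        using ch(2)[OF i] tm'_snoc[of v i] Wv by simp
      also have "\<dots> = map (\<lambda>(p, r). (p, replace_at (tm' v) \<pi> (subst (embed \<circ> \<sigma>) r))) mu' ! i"
        using i ch(1) unfolding mu'_def by (cases "mu ! i") simp
      finally show "children_dist N pr tm' v ! i = map (\<lambda>(p, r). (p, replace_at (tm' v) \<pi> (subst (embed \<circ> \<sigma>) r))) mu' ! i" .
    qed
    have "adp_step R (A_of R) (tm' v) (info v) (children_dist N pr tm' v)"
      unfolding info adp_step_def using inA posc ex fl anf cd annv by (simp add: Let_def)
    then show ?thesis using inA annv info by simp
  qed
  have ctree: "chain_tree R (A_of R) N pr tm' info (sharp_root t)"
    unfolding chain_tree_def using tree pr0 tm'0 stepv by simp
  have ann: "\<And>v. inner N v \<Longrightarrow> fst (snd (info v)) \<in> A_of R \<and> annotated_at (tm' v) (fst (info v))"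
    using stepv by simp
  have "{v. inner N v \<and> fst (snd (info v)) \<in> A_of R \<and> annotated_at (tm' v) (fst (info v))} = {v. inner N v}"
    using ann by blast
  then have "edl_PS (A_of R) N pr tm' info = edl N pr" unfolding edl_PS_def edl_def by simp
  then show ?thesis using ctree by blast
qed
lemma edh_le:
  assumes P: "PTRS \<Sigma> R" and B: "basic \<Sigma> R t"
  shows "edh R t \<le> edh_PS R (A_of R) (A_of R) t"
  unfolding edh_def
proof (rule SUP_least)
  fix T assume "T \<in> {(N, pr, tm). RST R N pr tm t}"
  then obtain N pr tm where T: "T = (N, pr, tm)" "RST R N pr tm t" by blast
  obtain tm' info where c: "chain_tree R (A_of R) N pr tm' info (sharp_root t)"
    "edl_PS (A_of R) N pr tm' info = edl N pr" using RST_to_chain[OF P T(2) B] by blast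
  have "(N, pr, tm', info) \<in> {(N, pr, tm, info). chain_tree R (A_of R) N pr tm info (sharp_root t)}"
    using c(1) by simp
  then have "edl_PS (A_of R) N pr tm' info \<le> edh_PS R (A_of R) (A_of R) t"
    unfolding edh_PS_def by (rule SUP_upper2) simp
  then show "(case T of (N, pr, tm) \<Rightarrow> edl N pr) \<le> edh_PS R (A_of R) (A_of R) t"
    using T(1) c(2) by simp
qed

lemma Pol0_le: "Pol 0 \<le> x"
  by (cases x) (simp_all add: less_eq_complexity_def)

lemma bigO_mono: "(\<And>n. f n \<le> g n) \<Longrightarrow> bigO g h \<Longrightarrow> bigO f h"
  unfolding bigO_def by (meson order_trans)

lemma iota_mono:
  assumes fg: "\<And>n. f n \<le> g n"
  shows "iota f \<le> iota g"
proof -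
  have M: "bigO g h \<Longrightarrow> bigO f h" for h by (rule bigO_mono[of f g h, OF fg])
  have P: "bigO g (\<lambda>n. real n ^ a) \<Longrightarrow> bigO f (\<lambda>n. real n ^ a)" for a using M by blast
  have E: "(\<exists>c d. bigO g (\<lambda>n. 2 powr (c * real n ^ d))) \<Longrightarrow> (\<exists>c d. bigO f (\<lambda>n. 2 powr (c * real n ^ d)))"
    using M by blast
  have T: "(\<exists>c d. bigO g (\<lambda>n. 2 powr (2 powr (c * real n ^ d)))) \<Longrightarrow> (\<exists>c d. bigO f (\<lambda>n. 2 powr (2 powr (c * real n ^ d))))"
    using M by blast
  have F: "(\<forall>n. g n \<noteq> top) \<Longrightarrow> (\<forall>n. f n \<noteq> top)"
    using fg by (metis top.not_eq_extremum order_le_less_trans)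
  show ?thesis
  proof (cases "\<exists>a. bigO g (\<lambda>n. real n ^ a)")
    case True
    define a where "a = (LEAST a. bigO g (\<lambda>n. real n ^ a))"
    have ga: "bigO g (\<lambda>n. real n ^ a)" unfolding a_def using True by (rule LeastI_ex)
    then have fa: "bigO f (\<lambda>n. real n ^ a)" using P by blast
    then have ex: "\<exists>a. bigO f (\<lambda>n. real n ^ a)" by blast
    have "(LEAST a. bigO f (\<lambda>n. real n ^ a)) \<le> a" using fa by (rule Least_le)
    then show ?thesis unfolding iota_def using True ex a_def by (simp add: less_eq_complexity_def)
  next
    case nP: False
    show ?thesis
    proof (cases "\<exists>c d. bigO g (\<lambda>n. 2 powr (c * real n ^ d))")
      case True
      then have "iota g = Exp" unfolding iota_def using nP by simp
      moreover have "iota f \<le> Exp" unfolding iota_def using E[OF True]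
        by (simp add: less_eq_complexity_def)
      ultimately show ?thesis by simp
    next
      case nE: False
      show ?thesis
      proof (cases "\<exists>c d. bigO g (\<lambda>n. 2 powr (2 powr (c * real n ^ d)))")
        case True
        then have "iota g = TwoExp" unfolding iota_def using nP nE by simp
        moreover have "iota f \<le> TwoExp" unfolding iota_def using T[OF True]
          by (simp add: less_eq_complexity_def)
        ultimately show ?thesis by simp
      next
        case nT: False
        show ?thesis
        proof (cases "\<forall>n. g n \<noteq> top")
          case True
          then have "iota g = Fin" unfolding iota_def using nP nE nT by simp
          moreover have "iota f \<le> Fin" unfolding iota_def using F[OF True]
            by (simp add: less_eq_complexity_def)
          ultimately show ?thesis by simp
        next
          case False
          then have "iota g = Omega" unfolding iota_def using nP nE nT by simp
          moreover have "x \<le> Omega" for x by (cases x) (simp_all add: less_eq_complexity_def)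
          ultimately show ?thesis by simp
        qed
      qed
    qed
  qed
qed

lemma iota_zero: "iota (\<lambda>n. 0) = Pol 0"
proof -
  have b: "bigO (\<lambda>n. 0) (\<lambda>n. real n ^ 0)" unfolding bigO_def by auto
  then have L: "(LEAST a. bigO (\<lambda>n. 0) (\<lambda>n. real n ^ a)) = 0" by (intro Least_eq_0)
  have ex: "\<exists>a. bigO (\<lambda>n. 0) (\<lambda>n. real n ^ a)" using b by blast
  show ?thesis unfolding iota_def if_P[OF ex] L ..
qed
lemma SUP_zero_enn: "(SUP x\<in>A. (0::ennreal)) = 0"
  by (cases "A = {}") (simp_all add: bot_ennreal)

lemma edh_PS_empty: "edh_PS R P {} t = 0"
proof -
  have e: "(\<lambda>x. case x of (N, pr, tm, info) \<Rightarrow> edl_PS {} N pr tm info) = (\<lambda>x. 0)"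
    by (rule ext) (auto simp: edl_PS_def psum_def split: prod.splits)
  show ?thesis unfolding edh_PS_def e by (rule SUP_zero_enn)
qed

lemma iota_PS_empty: "iota_PS \<Sigma> R (P, {}) = Pol 0"
  unfolding iota_PS_def by (simp add: edh_PS_empty iota_zero SUP_zero_enn)

theorem mainTheorem4:
  fixes \<Sigma> :: "('f \<times> nat) set" and R :: "('f, 'v) prule set"
    and V :: "nat list set" and LA :: "nat list \<Rightarrow> ('f, 'v) adp_problem"
    and LC :: "nat list \<Rightarrow> complexity"
  assumes "infinite (UNIV :: 'v set)"
    and "PTRS \<Sigma> R"
    and "proof_tree V LA LC"
    and "well_formed \<Sigma> R V LA LC"
    and "ptree_solved V LA"
    and "LA [] = (A_of R, A_of R)"
  shows "iota_R \<Sigma> R \<le> Max (LC ` V)"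
proof -
  have Vfin: "finite V" and V0: "[] \<in> V" using assms(3) unfolding proof_tree_def by auto
  define M where "M = Max (LC ` V)"
  define L' where "L' = (\<lambda>w. if ptree_inner V w then LC w else iota_PS \<Sigma> R (LA w))"
  have anc: "{u. \<exists>x. x \<noteq> [] \<and> [] = u @ x} = {}" by auto
  have desc: "{w \<in> V. \<exists>x. w = [] @ x} = V" by auto
  have wf0: "iota_PS \<Sigma> R (A_of R, A_of R) \<le> max (cmax (LC ` {})) (cmax (L' ` V))"
    using assms(4) V0 assms(6) unfolding well_formed_def Let_def anc desc L'_def by fastforce
  have c0: "cmax (LC ` {}) = Pol 0" unfolding cmax_def by simp
  have L'le: "L' w \<le> M" if "w \<in> V" for w
  proof (cases "ptree_inner V w")
    case True
    then show ?thesis unfolding L'_def M_def using Vfin that by simp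
  next
    case False
    then have "snd (LA w) = {}" using assms(5) that unfolding ptree_solved_def by blast
    then have "iota_PS \<Sigma> R (LA w) = Pol 0" using iota_PS_empty by (metis prod.collapse)
    then show ?thesis unfolding L'_def using False Pol0_le by simp
  qed
  have "cmax (L' ` V) \<le> M" unfolding cmax_def using Vfin L'le Pol0_le by (simp add: Max_le_iff)
  then have ps: "iota_PS \<Sigma> R (A_of R, A_of R) \<le> M" using wf0 c0 by (simp add: Pol0_le max_def split: if_splits)
  have "eirc \<Sigma> R n \<le> (SUP t \<in> {t. basic \<Sigma> R t \<and> tsize t \<le> n}. edh_PS R (A_of R) (A_of R) t)" for n
    unfolding eirc_def
  proof (rule SUP_mono)
    fix t assume "t \<in> {t. basic \<Sigma> R t \<and> tsize t \<le> n}"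
    then show "\<exists>m\<in>{t. basic \<Sigma> R t \<and> tsize t \<le> n}. edh R t \<le> edh_PS R (A_of R) (A_of R) m"
      using edh_le[OF assms(2)] by blast
  qed
  then have "iota_R \<Sigma> R \<le> iota_PS \<Sigma> R (A_of R, A_of R)"
    unfolding iota_R_def iota_PS_def by (simp add: iota_mono)
  then show ?thesis using ps M_def by simp
qed
end
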